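(* For every positive integer $\nu$, let $$C_{\nu}:=\sup_{t\in(0,1]}\frac{\left|1-\frac{(-1)^{\nu}T_{2\nu+1}(\sqrt{t})}{(2\nu+1)\sqrt{t}}\right|}{\sqrt{t}}.$$ Then $$\frac{1}{4}\leq\frac{C_{\nu}}{2\nu+1}\leq\frac{4}{9}.$$
   Context: $T_k$ denotes the Chebyshev polynomial of the first kind, defined by $T_0(t)=1$, $T_1(t)=t$, $T_{k+1}(t)=2tT_k(t)-T_{k-1}(t)$ for $k\ge 1$; equivalently $T_k(t)=\cos(k\arccos t)$ for $t\in[-1,1]$. *)

theory Defs
  imports "HOL-Analysis.Analysis"
begin

fun cheb_T :: "nat \<Rightarrow> real \<Rightarrow> real" where
  "cheb_T 0 t = 1"
| "cheb_T (Suc 0) t = t"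
| "cheb_T (Suc (Suc k)) t = 2 * t * cheb_T (Suc k) t - cheb_T k t"

definition C_const :: "nat \<Rightarrow> real" where
  "C_const \<nu> = (SUP t\<in>{0<..1}.
     \<bar>1 - (-1) ^ \<nu> * cheb_T (2 * \<nu> + 1) (sqrt t) / ((2 * \<nu> + 1) * sqrt t)\<bar> / sqrt t)"

end

theory Submission
  imports Defs
begin

lemma cheb_cos2: "cheb_T k (cos x) = cos (real k * x) \<and> cheb_T (Suc k) (cos x) = cos (real (Suc k) * x)"
proof (induction k)
  case (Suc k)
  have "cos (real (Suc (Suc k)) * x) = cos (real (Suc k) * x + x)" by (simp add: algebra_simps)
  moreover have "cos (real k * x) = cos (real (Suc k) * x - x)" by (simp add: algebra_simps)
  ultimately show ?case using Suc by (simp only: cheb_T.simps cos_add cos_diff) (simp add: algebra_simps)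
qed auto

lemma cheb_cos: "cheb_T k (cos x) = cos (real k * x)"
  using cheb_cos2 by blast

lemma cheb_sin: "(-1)^m * cheb_T (2*m+1) (sin y) = sin (real (2*m+1) * y)"
proof -
  have "sin y = cos (pi/2 - y)" by (simp add: cos_diff)
  then have "cheb_T (2*m+1) (sin y) = cos (real (2*m+1) * (pi/2 - y))" by (simp add: cheb_cos)
  also have "real (2*m+1) * (pi/2 - y) = real m * pi + (pi/2 - real (2*m+1) * y)" by (simp add: algebra_simps)
  also have "cos (real m * pi + (pi/2 - real (2*m+1) * y)) = (-1)^m * sin (real (2*m+1) * y)"
    by (simp only: cos_add cos_npi sin_npi) (simp add: cos_diff)
  finally show ?thesis by (simp add: power_mult_distrib[symmetric])
qed

lemma sin_mult_abs: "\<bar>sin (real k * y)\<bar> \<le> real k * \<bar>sin y\<bar>"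
proof (induction k)
  case (Suc k)
  have "sin (real (Suc k) * y) = sin (real k * y) * cos y + cos (real k * y) * sin y"
    by (simp add: distrib_right sin_add)
  also have "\<bar>\<dots>\<bar> \<le> \<bar>sin (real k * y)\<bar> + \<bar>sin y\<bar>"
  proof -
    have "\<bar>sin (real k * y) * cos y\<bar> \<le> \<bar>sin (real k * y)\<bar>"
      by (simp add: abs_mult mult_left_le)
    moreover have "\<bar>cos (real k * y) * sin y\<bar> \<le> \<bar>sin y\<bar>"
      by (simp add: abs_mult mult_left_le_one_le)
    ultimately show ?thesis by (smt (verit))
  qed
  finally show ?case using Suc by (simp add: algebra_simps)
qed simp

lemma sin_taylor3: "\<bar>sin x - x\<bar> \<le> \<bar>x::real\<bar>^3/6"
proof -
  have e1: "(\<Sum>m<3. sin_coeff m * x ^ m) = x"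
    by (simp add: numeral_3_eq_3 sin_coeff_def)
  have e2: "inverse (fact 3 :: real) = 1/6" by (simp add: numeral_3_eq_3)
  have "\<bar>sin x - x\<bar> \<le> inverse (fact 3) * \<bar>x\<bar> ^ 3"
    using Maclaurin_sin_bound[of x 3] unfolding e1 .
  then show ?thesis unfolding e2 by simp
qed

lemma sin_lip: "\<bar>sin u - sin a\<bar> \<le> \<bar>u - (a::real)\<bar>"
proof -
  have e: "\<bar>sin u - sin a\<bar> = 2 * \<bar>sin ((u - a)/2)\<bar> * \<bar>cos ((u+a)/2)\<bar>"
    by (simp add: sin_diff_sin abs_mult)
  have A: "\<bar>sin ((u - a)/2)\<bar> \<le> \<bar>(u - a)/2\<bar>" by (rule abs_sin_x_le_abs_x)
  have B: "\<bar>cos ((u+a)/2)\<bar> \<le> 1" by simp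
  have "\<bar>sin ((u - a)/2)\<bar> * \<bar>cos ((u+a)/2)\<bar> \<le> \<bar>(u - a)/2\<bar> * 1"
    by (rule mult_mono[OF A B]) auto
  then show ?thesis using e by simp
qed

lemma key_small:
  fixes n s y a :: real
  assumes n5: "n \<ge> 5" and y0: "0 < y" and yle: "y \<le> pi/2" and s: "s = sin y"
    and a: "a = n * s" and a3: "a < 3"
  shows "a - sin (n * y) \<le> 4/9 * a^2"
proof -
  have s0: "0 < s" using s y0 yle pi_gt3 by (auto intro: sin_gt_zero)
  have s35: "s < 3/5"
  proof -
    have "n * s < 3" using a a3 by simp
    moreover have "5 * s \<le> n * s" using n5 s0 by (intro mult_right_mono) auto
    ultimately show ?thesis by simp
  qed
  have t1: "\<bar>sin y - y\<bar> \<le> y^3/6" using sin_taylor3[of y] y0 by simp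
  have y65: "y < 0.65"
  proof (rule ccontr)
    assume "\<not> y < 0.65"
    then have "sin 0.65 \<le> sin y" using yle pi_gt3
      by (subst sin_mono_le_eq) auto
    moreover have "\<bar>sin 0.65 - 0.65\<bar> \<le> \<bar>0.65::real\<bar>^3/6" by (rule sin_taylor3)
    ultimately show False using s s35 by (simp add: power3_eq_cube)
  qed
  have sy: "s \<ge> y - y^3/6" using t1 s by linarith
  have "y^3/6 \<le> y * (0.4225/6)"
  proof -
    have "y*y \<le> 0.65*0.65" using y0 y65 by (intro mult_mono) auto
    then have "y^2 \<le> 0.4225" by (simp add: power2_eq_square)
    then have "y * y^2 \<le> y * 0.4225" using y0 by (intro mult_left_mono) auto
    then show ?thesis by (simp add: power3_eq_cube power2_eq_square)
  qed
  then have ycs: "y \<le> 1.076 * s" using sy y0 by simp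
  have ys: "s \<le> y" using s y0 sin_x_le_x[of y] by simp
  have d1: "y - s \<le> (1.076 * s)^3 / 6"
  proof -
    have "y^3 \<le> (1.076 * s)^3" using ycs y0 by (intro power_mono) auto
    then show ?thesis using sy by simp
  qed
  have a0: "0 < a" using a n5 s0 by simp
  have a30: "0 \<le> a^3" using a0 by simp
  have "n * (y - s) \<le> n * ((1.076 * s)^3 / 6)" using d1 n5 by (intro mult_left_mono) auto
  also have "\<dots> = (1.076^3/6) * (n * s)^3 / n^2" using n5
    by (simp add: power_mult_distrib power2_eq_square power3_eq_cube)
  also have "\<dots> = (1.076^3/6) * a^3 / n^2" using a by simp
  also have "\<dots> \<le> (1.076^3/6) * a^3 / 25"
  proof -
    have "5*5 \<le> n*n" using n5 by (intro mult_mono) auto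
    then have "25 \<le> n^2" by (simp add: power2_eq_square)
    moreover have "0 \<le> (1.076^3/6) * a^3" using a30 by simp
    ultimately show ?thesis by (intro divide_left_mono) auto
  qed
  also have "\<dots> = (1.076^3/150) * a^3" by simp
  also have "\<dots> \<le> (1/120) * a^3"
  proof (rule mult_right_mono[OF _ a30])
    show "(1.076^3/150::real) \<le> 1/120" by (simp add: power_divide)
  qed
  also have "\<dots> = a^3/120" by simp
  finally have d2': "n * (y - s) \<le> a^3/120" .
  have nya: "n * y - a = n * (y - s)" unfolding a by (simp add: right_diff_distrib)
  have d2: "n * y - a \<le> a^3/120" using d2' nya by simp
  have d3: "n * y - a \<ge> 0" unfolding nya using ys n5 by simp
  have "sin a - sin (n*y) \<le> n * y - a" using sin_lip[of a "n*y"] d3 by simp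
  then have main: "a - sin (n*y) \<le> a - sin a + a^3/120" using d2 by simp
  show ?thesis
  proof (cases "a \<le> 2.5")
    case True
    have "\<bar>sin a - a\<bar> \<le> a^3/6" using sin_taylor3[of a] a0 by simp
    then have "a - sin a \<le> a^3/6" by linarith
    moreover have "a^3/6 + a^3/120 = a^2 * (a * (21/120))" by (simp add: power3_eq_cube power2_eq_square)
    ultimately have "a - sin (n*y) \<le> a^2 * (a * (21/120))" using main by linarith
    also have "\<dots> \<le> a^2 * (4/9)" using True a0 by (intro mult_left_mono) auto
    finally show ?thesis by simp
  next
    case False
    have "0 \<le> sin a" using a0 a3 pi_gt3 by (intro sin_ge_zero) auto
    moreover have "a^3 \<le> 27"
    proof -
      have "a^3 \<le> 3^3" using a0 a3 by (intro power_mono) auto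
      then show ?thesis by simp
    qed
    moreover have "a + 27/120 \<le> 4/9 * a^2"
    proof -
      have "0 \<le> (a-2.5)*(4/9*a+1/9)" using False a0 by (intro mult_nonneg_nonneg) auto
      moreover have "(a-2.5)*(4/9*a+1/9) = 4/9*a^2 - a - 5/18" by (simp add: power2_eq_square field_simps)
      ultimately show ?thesis by linarith
    qed
    ultimately show ?thesis using main by linarith
  qed
qed

lemma upper_pt:
  fixes m :: nat and y :: real
  assumes m1: "m \<ge> 1" and y0: "0 < y" and yle: "y \<le> pi/2"
  shows "\<bar>1 - sin (real (2*m+1) * y) / (real (2*m+1) * sin y)\<bar> / sin y \<le> 4/9 * real (2*m+1)"
proof -
  define n where "n = real (2*m+1)"
  define s where "s = sin y"
  define a where "a = n * s"
  have n3: "n \<ge> 3" using m1 n_def by simp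
  have s0: "0 < s" unfolding s_def using y0 yle pi_gt3 by (intro sin_gt_zero) auto
  have s1: "s \<le> 1" unfolding s_def by simp
  have a0: "0 < a" unfolding a_def using n3 s0 by simp
  have lo: "0 \<le> a - sin (n*y)"
    using sin_mult_abs[of "2*m+1" y] s0 unfolding n_def a_def s_def by simp
  have hi: "a - sin (n*y) \<le> 4/9 * a^2"
  proof (cases "a \<ge> 3")
    case True
    have "0 \<le> (a-3)*(4/9*a+1/3)" using True by (intro mult_nonneg_nonneg) auto
    moreover have "(a-3)*(4/9*a+1/3) = 4/9*a^2 - a - 1" by (simp add: power2_eq_square field_simps)
    moreover have "- 1 \<le> sin (n*y)" by simp
    ultimately show ?thesis by linarith
  next
    case False
    show ?thesis
    proof (cases "m = 1")
      case True
      have "(-1)^1 * cheb_T (2*1+1) (sin y) = sin (real (2*1+1) * y)" by (rule cheb_sin)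
      then have e: "sin (n*y) = 3 * s - 4 * s ^ 3" unfolding n_def s_def True
        by (simp add: numeral_3_eq_3 power3_eq_cube algebra_simps)
      have "s ^ 3 \<le> s ^ 2" using s0 s1 by (simp add: power3_eq_cube power2_eq_square mult_left_le_one_le)
      moreover have "a = 3 * s" unfolding a_def n_def True by simp
      ultimately show ?thesis using e by (simp add: power2_eq_square)
    next
      case False
      then have "n \<ge> 5" using m1 n_def by simp
      then show ?thesis using key_small[of n y s a] y0 yle s_def a_def \<open>\<not> a \<ge> 3\<close> by simp
    qed
  qed
  have "1 - sin (n * y) / (n * s) = (a - sin (n*y)) / a" unfolding a_def using n3 s0 by (simp add: field_simps)
  then have "\<bar>1 - sin (n * y) / (n * s)\<bar> / s = (a - sin (n*y)) / (a * s)" using lo a0 by simp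
  also have "\<dots> \<le> 4/9 * n"
  proof -
    have "4/9 * n * (a * s) = 4/9 * a^2" unfolding a_def by (simp add: power2_eq_square)
    moreover have pos: "0 < a * s" using a0 s0 by simp
    ultimately show ?thesis unfolding pos_divide_le_eq[OF pos] using hi by linarith
  qed
  finally show ?thesis unfolding n_def s_def .
qed

theorem mainTheorem1:
  fixes \<nu> :: nat
  assumes "\<nu> \<ge> 1"
  shows "1 / 4 \<le> C_const \<nu> / (2 * real \<nu> + 1) \<and> C_const \<nu> / (2 * real \<nu> + 1) \<le> 4 / 9"
proof -
  define F where "F = (\<lambda>t. \<bar>1 - (-1) ^ \<nu> * cheb_T (2 * \<nu> + 1) (sqrt t) / ((2 * real \<nu> + 1) * sqrt t)\<bar> / sqrt t)"
  have C: "C_const \<nu> = (SUP t\<in>{0<..1}. F t)" unfolding C_const_def F_def ..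
  define n where "n = 2 * real \<nu> + 1"
  have nr: "real (2*\<nu>+1) = n" unfolding n_def by simp
  have n3: "n \<ge> 3" using assms n_def by simp
  have cs: "(-1) ^ \<nu> * cheb_T (2 * \<nu> + 1) (sin y) = sin (n * y)" for y
    using cheb_sin[of \<nu> y] nr by simp
  have Fy: "F ((sin y)^2) = \<bar>1 - sin (n * y) / (n * sin y)\<bar> / sin y" if "0 < y" "y \<le> pi/2" for y
  proof -
    have "0 < sin y" using that pi_gt3 by (intro sin_gt_zero) auto
    then have "sqrt ((sin y)^2) = sin y" by simp
    moreover have nn: "2 * real \<nu> + 1 = n" unfolding n_def ..
    ultimately show ?thesis unfolding F_def nn using cs[of y] by simp
  qed
  have Fup: "F t \<le> 4/9 * n" if t: "t \<in> {0<..1}" for t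
  proof -
    define x where "x = sqrt t"
    have x0: "0 < x" and x1: "x \<le> 1" using t unfolding x_def by auto
    define y where "y = arcsin x"
    have sy: "sin y = x" unfolding y_def using x0 x1 by simp
    have y0: "0 < y" unfolding y_def using arcsin_less_mono[of 0 x] x0 x1 by simp
    have y1: "y \<le> pi/2" unfolding y_def using arcsin_ubound[of x] x0 x1 by simp
    have "t = (sin y)^2" using sy t unfolding x_def by simp
    then have "F t = \<bar>1 - sin (n * y) / (n * sin y)\<bar> / sin y" using Fy[OF y0 y1] by simp
    also have "\<dots> \<le> 4/9 * n" using upper_pt[OF assms y0 y1] nr by simp
    finally show ?thesis .
  qed
  have bdd: "bdd_above (F ` {0<..1})" by (rule bdd_aboveI2[where M="4/9*n"]) (rule Fup)
  have up: "C_const \<nu> \<le> 4/9 * n" unfolding C by (rule cSUP_least) (simp, rule Fup)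
  define y0 where "y0 = 3 * pi / (2 * n)"
  have y00: "0 < y0" unfolding y0_def using n3 by simp
  have y01: "y0 \<le> pi/2" unfolding y0_def using n3 by (simp add: field_simps)
  define x0 where "x0 = sin y0"
  have x00: "0 < x0" unfolding x0_def using y00 y01 pi_gt3 by (intro sin_gt_zero) auto
  have x0y: "x0 \<le> y0" unfolding x0_def using sin_x_le_x[of y0] y00 by simp
  have "n * y0 = pi/2 + pi" unfolding y0_def using n3 by (simp add: field_simps)
  then have sn: "sin (n * y0) = -1" by (simp only: sin_periodic_pi sin_pi_half)
  have t0: "x0^2 \<in> {0<..1}" using x00 unfolding x0_def by (simp add: abs_square_le_1)
  have "F (x0^2) = (1/x0) * (1 + 1/(n*x0))"
    using Fy[OF y00 y01] sn x00 n3 unfolding x0_def[symmetric]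
    by (simp add: divide_simps mult.assoc mult.left_commute)
  also have "\<dots> \<ge> (1/y0) * (1 + 1/(n*y0))"
  proof (rule mult_mono)
    show "1/y0 \<le> 1/x0" using x00 x0y by (simp add: frac_le)
    show "1 + 1/(n*y0) \<le> 1 + 1/(n*x0)" using x00 x0y n3 by (simp add: frac_le)
  qed (use x00 y00 n3 in auto)
  finally have low1: "(1/y0) * (1 + 1/(n*y0)) \<le> F (x0^2)" .
  have "(1/y0) * (1 + 1/(n*y0)) = n * ((2/(3*pi)) * (1 + 2/(3*pi)))"
    unfolding y0_def using n3 by (simp add: field_simps)
  also have "\<dots> \<ge> n * (1/4)"
  proof -
    have r: "2/(3*pi) \<ge> 0.21" using pi_approx by (simp add: field_simps)
    have "(21/100) * (1 + 21/100) \<le> (2/(3*pi)) * (1 + 2/(3*pi))" using r by (intro mult_mono) auto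
    moreover have "(1/4::real) \<le> (21/100) * (1 + 21/100)" by simp
    ultimately have "1/4 \<le> (2/(3*pi)) * (1 + 2/(3*pi))" by linarith
    then show ?thesis using n3 by (intro mult_left_mono) auto
  qed
  finally have "n * (1/4) \<le> (1/y0) * (1 + 1/(n*y0))" .
  then have "n/4 \<le> F (x0^2)" using low1 by linarith
  also have "F (x0^2) \<le> C_const \<nu>" unfolding C by (rule cSUP_upper[OF t0 bdd])
  finally have lo: "n/4 \<le> C_const \<nu>" .
  have "1/4 \<le> C_const \<nu> / n" using lo n3 by (simp add: field_simps)
  moreover have "C_const \<nu> / n \<le> 4/9" using up n3 by (simp add: field_simps)
  ultimately show ?thesis unfolding n_def by simp
qed

end
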